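(* Let $k$ be a field of prime characteristic $p$, and let $V_1,V_2,\ldots$ be a sequence of $T$-spaces of $k_0\langle X\rangle$ such that (a) $(V_iV_j)^S=V_{i+j}$ for all $i,j\ge1$, and (b) $V_{2m+1}\subseteq V_{m+1}+V_1$ for all $m\ge1$. Let $I: i_1<i_2<i_3<\cdots$ be any increasing sequence of positive integers. Then there exists a set $J$ of positive integers (indices of the sequence) with $|J|\le i_2-i_1+1$ such that $1,2\in J$ and $\sum_{j\ge1} V_{i_j}=\sum_{j\in J}V_{i_j}$.
   Context: $X=\{x_1,x_2,\ldots\}$ is a countably infinite set and $k_0\langle X\rangle$ denotes the free associative (non-unital) $k$-algebra on $X$. A $T$-space is a $k$-subspace of $k_0\langle X\rangle$ invariant under every algebra endomorphism of $k_0\langle X\rangle$. For a subset $A$, $(A)^S$ denotes the $T$-space generated by $A$. For subsets $A,B$, $AB$ denotes $\{ab: a\in A, b\in B\}$. Sums of $T$-spaces are sums of subspaces. *)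

theory Defs
  imports Main "HOL-Computational_Algebra.Primes"
begin

text \<open>The free non-unital associative algebra k_0<X> on X = {x_0, x_1, ...} (countably
infinite, indexed by nat) is modelled as the set of finitely supported functions from
words (lists of variable indices) to k, vanishing on the empty word (no constant term).\<close>

type_synonym 'k fpoly = "nat list \<Rightarrow> 'k"

definition FA :: "'k::field fpoly set" where
  "FA = {f. finite {w. f w \<noteq> 0} \<and> f [] = 0}"

definition fadd :: "'k::field fpoly \<Rightarrow> 'k fpoly \<Rightarrow> 'k fpoly" where
  "fadd f g = (\<lambda>w. f w + g w)"

definition fscale :: "'k::field \<Rightarrow> 'k fpoly \<Rightarrow> 'k fpoly" where
  "fscale c f = (\<lambda>w. c * f w)"

definition fzero :: "'k::field fpoly" where
  "fzero = (\<lambda>w. 0)"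

definition fmul :: "'k::field fpoly \<Rightarrow> 'k fpoly \<Rightarrow> 'k fpoly" where
  "fmul f g = (\<lambda>w. \<Sum>n\<in>{..length w}. f (take n w) * g (drop n w))"

definition is_subspace :: "'k::field fpoly set \<Rightarrow> bool" where
  "is_subspace S \<longleftrightarrow> S \<subseteq> FA \<and> fzero \<in> S \<and>
     (\<forall>f\<in>S. \<forall>g\<in>S. fadd f g \<in> S) \<and> (\<forall>c. \<forall>f\<in>S. fscale c f \<in> S)"

definition is_alg_endo :: "('k::field fpoly \<Rightarrow> 'k fpoly) \<Rightarrow> bool" where
  "is_alg_endo \<phi> \<longleftrightarrow> (\<forall>f\<in>FA. \<phi> f \<in> FA) \<and>
     (\<forall>f\<in>FA. \<forall>g\<in>FA. \<phi> (fadd f g) = fadd (\<phi> f) (\<phi> g)) \<and>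
     (\<forall>c. \<forall>f\<in>FA. \<phi> (fscale c f) = fscale c (\<phi> f)) \<and>
     (\<forall>f\<in>FA. \<forall>g\<in>FA. \<phi> (fmul f g) = fmul (\<phi> f) (\<phi> g))"

definition is_Tspace :: "'k::field fpoly set \<Rightarrow> bool" where
  "is_Tspace S \<longleftrightarrow> is_subspace S \<and> (\<forall>\<phi>. is_alg_endo \<phi> \<longrightarrow> (\<forall>f\<in>S. \<phi> f \<in> S))"

definition Tgen :: "'k::field fpoly set \<Rightarrow> 'k fpoly set" where
  "Tgen A = \<Inter>{S. is_Tspace S \<and> A \<subseteq> S}"

definition setmul :: "'k::field fpoly set \<Rightarrow> 'k fpoly set \<Rightarrow> 'k fpoly set" where
  "setmul A B = {fmul a b | a b. a \<in> A \<and> b \<in> B}"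

definition ssum2 :: "'k::field fpoly set \<Rightarrow> 'k fpoly set \<Rightarrow> 'k fpoly set" where
  "ssum2 A B = {fadd a b | a b. a \<in> A \<and> b \<in> B}"

definition ssum :: "'i set \<Rightarrow> ('i \<Rightarrow> 'k::field fpoly set) \<Rightarrow> 'k fpoly set" where
  "ssum I V = \<Inter>{S. is_subspace S \<and> (\<Union>j\<in>I. V j) \<subseteq> S}"

end

theory Submission
  imports Defs
begin

lemma fmul_fadd_left: "fmul (fadd g h) k = fadd (fmul g k) (fmul h k)"
  unfolding fmul_def fadd_def by (simp add: distrib_right sum.distrib)

lemma FA_fadd: "f \<in> FA \<Longrightarrow> g \<in> FA \<Longrightarrow> fadd f g \<in> FA"
proof -
  assume f: "f \<in> FA" and g: "g \<in> FA"
  have "{w. f w + g w \<noteq> 0} \<subseteq> {w. f w \<noteq> 0} \<union> {w. g w \<noteq> 0}" by auto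
  then show ?thesis using f g unfolding FA_def fadd_def by (auto intro: finite_subset)
qed

lemma FA_fscale: "f \<in> FA \<Longrightarrow> fscale c f \<in> FA"
proof -
  assume f: "f \<in> FA"
  have "{w. c * f w \<noteq> 0} \<subseteq> {w. f w \<noteq> 0}" by auto
  then show ?thesis using f unfolding FA_def fscale_def by (auto intro: finite_subset)
qed

lemma FA_fzero: "fzero \<in> FA"
  unfolding FA_def fzero_def by simp

lemma subspace_FA: "is_subspace FA"
  unfolding is_subspace_def using FA_fadd FA_fscale FA_fzero by blast

lemma fadd_fzero: "fadd fzero fzero = fzero"
  unfolding fadd_def fzero_def by simp

lemma fadd_swap: "fadd (fadd a b) (fadd a' b') = fadd (fadd a a') (fadd b b')"
  unfolding fadd_def by (simp add: algebra_simps)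

lemma fscale_fadd: "fscale c (fadd a b) = fadd (fscale c a) (fscale c b)"
  unfolding fadd_def fscale_def by (simp add: algebra_simps)

lemma Tspace_ssum2:
  fixes A B :: "'k::field fpoly set"
  assumes A: "is_Tspace A" and B: "is_Tspace B"
  shows "is_Tspace (ssum2 A B)"
proof -
  have sA: "A \<subseteq> FA" "fzero \<in> A" "\<forall>f\<in>A. \<forall>g\<in>A. fadd f g \<in> A" "\<forall>c. \<forall>f\<in>A. fscale c f \<in> A"
    "\<forall>\<phi>. is_alg_endo \<phi> \<longrightarrow> (\<forall>f\<in>A. \<phi> f \<in> A)"
    using A unfolding is_Tspace_def is_subspace_def by auto
  have sB: "B \<subseteq> FA" "fzero \<in> B" "\<forall>f\<in>B. \<forall>g\<in>B. fadd f g \<in> B" "\<forall>c. \<forall>f\<in>B. fscale c f \<in> B"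
    "\<forall>\<phi>. is_alg_endo \<phi> \<longrightarrow> (\<forall>f\<in>B. \<phi> f \<in> B)"
    using B unfolding is_Tspace_def is_subspace_def by auto
  have "ssum2 A B \<subseteq> FA" using sA(1) sB(1) FA_fadd unfolding ssum2_def by blast
  moreover have "fzero \<in> ssum2 A B" using sA(2) sB(2) fadd_fzero[symmetric] unfolding ssum2_def by blast
  moreover have "\<forall>f\<in>ssum2 A B. \<forall>g\<in>ssum2 A B. fadd f g \<in> ssum2 A B"
  proof (intro ballI)
    fix f g assume "f \<in> ssum2 A B" "g \<in> ssum2 A B"
    then obtain a b a' b' where ab: "f = fadd a b" "a \<in> A" "b \<in> B" "g = fadd a' b'" "a' \<in> A" "b' \<in> B"
      unfolding ssum2_def by blast
    have "fadd f g = fadd (fadd a a') (fadd b b')" using ab fadd_swap by simp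
    moreover have "fadd a a' \<in> A" "fadd b b' \<in> B" using ab sA(3) sB(3) by auto
    ultimately show "fadd f g \<in> ssum2 A B" unfolding ssum2_def by blast
  qed
  moreover have "\<forall>c. \<forall>f\<in>ssum2 A B. fscale c f \<in> ssum2 A B"
  proof (intro allI ballI)
    fix c f assume "f \<in> ssum2 A B"
    then obtain a b where ab: "f = fadd a b" "a \<in> A" "b \<in> B"
      unfolding ssum2_def by blast
    have "fscale c f = fadd (fscale c a) (fscale c b)" using ab fscale_fadd by simp
    moreover have "fscale c a \<in> A" "fscale c b \<in> B" using ab sA(4) sB(4) by auto
    ultimately show "fscale c f \<in> ssum2 A B" unfolding ssum2_def by blast
  qed
  moreover have "\<forall>\<phi>. is_alg_endo \<phi> \<longrightarrow> (\<forall>f\<in>ssum2 A B. \<phi> f \<in> ssum2 A B)"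
  proof (intro allI impI ballI)
    fix \<phi> :: "'k fpoly \<Rightarrow> 'k fpoly" and f assume e: "is_alg_endo \<phi>" and f: "f \<in> ssum2 A B"
    then obtain a b where ab: "f = fadd a b" "a \<in> A" "b \<in> B" unfolding ssum2_def by blast
    then have "\<phi> f = fadd (\<phi> a) (\<phi> b)" using e sA(1) sB(1) unfolding is_alg_endo_def by blast
    moreover have "\<phi> a \<in> A" "\<phi> b \<in> B" using e ab sA(5) sB(5) by auto
    ultimately show "\<phi> f \<in> ssum2 A B" unfolding ssum2_def by blast
  qed
  ultimately show ?thesis unfolding is_Tspace_def is_subspace_def by blast
qed

lemma Tgen_least: "is_Tspace U \<Longrightarrow> A \<subseteq> U \<Longrightarrow> Tgen A \<subseteq> U"
  unfolding Tgen_def by blast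

lemma Tgen_sup: "A \<subseteq> Tgen A"
  unfolding Tgen_def by blast

lemma shiftB:
  fixes V :: "nat \<Rightarrow> 'k::field fpoly set"
  assumes T: "\<forall>n\<ge>1. is_Tspace (V n)"
    and M: "\<forall>a\<ge>1. \<forall>b\<ge>1. Tgen (setmul (V a) (V b)) = V (a + b)"
    and B: "\<forall>m\<ge>1. V (2 * m + 1) \<subseteq> ssum2 (V (m + 1)) (V 1)"
    and m: "m \<ge> 1"
  shows "V (2*m+1+c) \<subseteq> ssum2 (V (m+1+c)) (V (1+c))"
proof (induction c)
  case 0
  then show ?case using B m by simp
next
  case (Suc c)
  have e: "V (2*m+1+Suc c) = Tgen (setmul (V (2*m+1+c)) (V 1))"
    using M[rule_format, of "2*m+1+c" 1] by simp
  have TU: "is_Tspace (ssum2 (V (m+1+Suc c)) (V (1+Suc c)))"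
    using T Tspace_ssum2[of "V (m+1+Suc c)" "V (1+Suc c)"] by simp
  have "setmul (V (2*m+1+c)) (V 1) \<subseteq> ssum2 (V (m+1+Suc c)) (V (1+Suc c))"
  proof
    fix y assume "y \<in> setmul (V (2*m+1+c)) (V 1)"
    then obtain f k where fk: "y = fmul f k" "f \<in> V (2*m+1+c)" "k \<in> V 1"
      unfolding setmul_def by blast
    then obtain g h where gh: "f = fadd g h" "g \<in> V (m+1+c)" "h \<in> V (1+c)"
      using Suc unfolding ssum2_def by blast
    have "fmul g k \<in> setmul (V (m+1+c)) (V 1)" using gh fk unfolding setmul_def by blast
    then have "fmul g k \<in> Tgen (setmul (V (m+1+c)) (V 1))" using Tgen_sup by blast
    also have "\<dots> = V (m+1+Suc c)" using M[rule_format, of "m+1+c" 1] by simp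
    finally have 1: "fmul g k \<in> V (m+1+Suc c)" .
    have "fmul h k \<in> setmul (V (1+c)) (V 1)" using gh fk unfolding setmul_def by blast
    then have "fmul h k \<in> Tgen (setmul (V (1+c)) (V 1))" using Tgen_sup by blast
    also have "\<dots> = V (1+Suc c)" using M[rule_format, of "1+c" 1] by simp
    finally have 2: "fmul h k \<in> V (1+Suc c)" .
    have "y = fadd (fmul g k) (fmul h k)" using fk gh fmul_fadd_left by simp
    then show "y \<in> ssum2 (V (m+1+Suc c)) (V (1+Suc c))" using 1 2 unfolding ssum2_def by blast
  qed
  then have "Tgen (setmul (V (2*m+1+c)) (V 1)) \<subseteq> ssum2 (V (m+1+Suc c)) (V (1+Suc c))"
    by (rule Tgen_least[OF TU])
  then show ?case using e by simp
qed

lemma ssum_subspace: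
  assumes "\<forall>j\<in>I. V j \<subseteq> FA"
  shows "is_subspace (ssum I V)"
proof -
  let ?C = "{S. is_subspace S \<and> (\<Union>j\<in>I. V j) \<subseteq> S}"
  have FAC: "FA \<in> ?C" using assms subspace_FA by blast
  have "ssum I V \<subseteq> FA" unfolding ssum_def using FAC by blast
  moreover have "fzero \<in> ssum I V" unfolding ssum_def is_subspace_def by blast
  moreover have "\<forall>f\<in>ssum I V. \<forall>g\<in>ssum I V. fadd f g \<in> ssum I V"
    unfolding ssum_def is_subspace_def by blast
  moreover have "\<forall>c. \<forall>f\<in>ssum I V. fscale c f \<in> ssum I V"
    unfolding ssum_def is_subspace_def by blast
  ultimately show ?thesis unfolding is_subspace_def by blast
qed

lemma ssum_upper: "j \<in> I \<Longrightarrow> V j \<subseteq> ssum I V"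
  unfolding ssum_def by blast

lemma ssum_least: "is_subspace S \<Longrightarrow> \<forall>j\<in>I. V j \<subseteq> S \<Longrightarrow> ssum I V \<subseteq> S"
  unfolding ssum_def by blast

lemma ssum_mono: "I \<subseteq> I' \<Longrightarrow> ssum I V \<subseteq> ssum I' V"
  unfolding ssum_def by blast

lemma prog:
  assumes cl: "\<And>u v. P u \<Longrightarrow> P v \<Longrightarrow> u < v \<Longrightarrow> P (2*v - u)"
    and "P u" "P (u+e)" "e \<ge> (1::nat)"
  shows "P (u + k*e)"
proof -
  have "P (u + k*e) \<and> P (u + Suc k * e)"
  proof (induction k)
    case 0 then show ?case using assms by simp
  next
    case (Suc k)
    have eq: "2*(u + Suc k*e) - (u + k*e) = u + Suc (Suc k) * e" by (simp add: algebra_simps)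
    have "u + k*e < u + Suc k * e" using assms(4) by simp
    then have "P (2*(u + Suc k*e) - (u + k*e))" using cl Suc by blast
    then have "P (u + Suc (Suc k) * e)" by (simp only: eq)
    then show ?case using Suc by blast
  qed
  then show ?thesis by blast
qed

lemma two:
  assumes cl: "\<And>u v. P u \<Longrightarrow> P v \<Longrightarrow> u < v \<Longrightarrow> P (2*v - u)"
  shows "P x \<Longrightarrow> P (x+g) \<Longrightarrow> P (x+d) \<Longrightarrow> g \<ge> (1::nat) \<Longrightarrow> d \<ge> 1 \<Longrightarrow> P (x + \<alpha>*g + \<beta>*d)"
proof (induction "g+d" arbitrary: x g d \<alpha> \<beta> rule: less_induct)
  case less
  show ?case
  proof (cases "g = d")
    case True
    then have eq: "x + (\<alpha>+\<beta>)*g = x + \<alpha>*g + \<beta>*d" by (simp add: algebra_simps)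
    have "P (x + (\<alpha>+\<beta>)*g)" using prog[where P=P, OF cl, of x g "\<alpha>+\<beta>"] less.prems by blast
    then show ?thesis by (simp only: eq)
  next
    case False
    show ?thesis
    proof (cases "\<alpha> + \<beta> = 0")
      case True then show ?thesis using less.prems by simp
    next
      case ab: False
      show ?thesis
      proof (cases "g < d")
        case True
        define e where "e = d - g"
        have "P (x + 2*g)" using prog[where P=P, OF cl, of x g 2] less.prems by blast
        then have p2: "P (x + g + g)" by (simp add: mult_2 add.assoc)
        have lt2: "g + e < g + d" and e1: "e \<ge> 1" and xd: "x + g + e = x + d" using True e_def less.prems by auto
        have "P (x + g + e)" by (subst xd) (rule less.prems(3))
        then have "P (x + g + (\<alpha>+\<beta>-1)*g + \<beta>*e)"
          using less.hyps[OF lt2, of "x+g" "\<alpha>+\<beta>-1" \<beta>] less.prems(2,4) e1 p2 by blast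
        moreover have "x + g + (\<alpha>+\<beta>-1)*g + \<beta>*e = x + \<alpha>*g + \<beta>*d"
        proof -
          have "g + (\<alpha>+\<beta>-1)*g = (\<alpha>+\<beta>)*g" using ab by (cases "\<alpha>+\<beta>") auto
          moreover have "\<beta>*d = \<beta>*g + \<beta>*e" using e_def True by (simp add: algebra_simps)
          ultimately show ?thesis by (simp add: algebra_simps)
        qed
        ultimately show ?thesis by (rule back_subst)
      next
        case F2: False
        then have lt: "d < g" using False by simp
        define e where "e = g - d"
        have "P (x + 2*d)" using prog[where P=P, OF cl, of x d 2] less.prems by blast
        then have p2: "P (x + d + d)" by (simp add: mult_2 add.assoc)
        have lt2: "d + e < g + d" and e1: "e \<ge> 1" and xd: "x + d + e = x + g" using lt e_def less.prems by auto
        have "P (x + d + e)" by (subst xd) (rule less.prems(2))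
        then have "P (x + d + (\<alpha>+\<beta>-1)*d + \<alpha>*e)"
          using less.hyps[OF lt2, of "x+d" "\<alpha>+\<beta>-1" \<alpha>] less.prems(3,5) e1 p2 by blast
        moreover have "x + d + (\<alpha>+\<beta>-1)*d + \<alpha>*e = x + \<alpha>*g + \<beta>*d"
        proof -
          have "d + (\<alpha>+\<beta>-1)*d = (\<alpha>+\<beta>)*d" using ab by (cases "\<alpha>+\<beta>") auto
          moreover have "\<alpha>*g = \<alpha>*d + \<alpha>*e" using e_def lt by (simp add: algebra_simps)
          ultimately show ?thesis by (simp add: algebra_simps)
        qed
        ultimately show ?thesis by (rule back_subst)
      qed
    qed
  qed
qed

lemma mono_i:
  assumes "\<forall>j\<ge>1. i j < i (Suc j)" "(1::nat) \<le> j" "j < j'"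
  shows "i j < (i j' :: nat)"
  using assms(3)
proof (induction j')
  case 0 then show ?case by simp
next
  case (Suc j')
  show ?case
  proof (cases "j < j'")
    case True
    then have "i j < i j'" using Suc by blast
    moreover have "i j' < i (Suc j')" using assms(1) assms(2) True by simp
    ultimately show ?thesis by simp
  next
    case False
    then have "j = j'" using Suc by simp
    then show ?thesis using assms(1) assms(2) by simp
  qed
qed

theorem proposition2p1:
  fixes V :: "nat \<Rightarrow> 'k::field fpoly set" and i :: "nat \<Rightarrow> nat" and p :: nat
  assumes "prime p" and "CHAR('k) = p"
    and "\<forall>n\<ge>1. is_Tspace (V n)"
    and "\<forall>a\<ge>1. \<forall>b\<ge>1. Tgen (setmul (V a) (V b)) = V (a + b)"
    and "\<forall>m\<ge>1. V (2 * m + 1) \<subseteq> ssum2 (V (m + 1)) (V 1)"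
    and "i 1 \<ge> 1" and "\<forall>j\<ge>1. i j < i (Suc j)"
  shows "\<exists>J. J \<subseteq> {1..} \<and> finite J \<and> card J \<le> i 2 - i 1 + 1 \<and> 1 \<in> J \<and> 2 \<in> J \<and>
           ssum {j. j \<ge> 1} (\<lambda>j. V (i j)) = ssum J (\<lambda>j. V (i j))"
proof -
  define a where "a = i 1"
  define d where "d = i 2 - i 1"
  have i12: "i 1 < i 2" using assms(7)[rule_format, of 1] by (simp add: numeral_2_eq_2)
  have d1: "d \<ge> 1" and b: "i 2 = a + d" using i12 unfolding a_def d_def by auto
  have imono: "\<And>j j'. 1 \<le> j \<Longrightarrow> j \<le> j' \<Longrightarrow> i j \<le> i j'"
    using mono_i[OF assms(7)] by (metis le_eq_less_or_eq)
  have ipos: "\<And>j. j \<ge> 1 \<Longrightarrow> i j \<ge> 1"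
    using imono[of 1] assms(6) by (meson le_trans order_refl)
  define F where "F = {j. j \<ge> 1 \<and> (\<forall>j'. 1 \<le> j' \<and> j' < j \<longrightarrow> i j' mod d \<noteq> i j mod d)}"
  define J where "J = insert 2 F"
  have JF: "J \<subseteq> {1..}" unfolding J_def F_def by auto
  have injF: "inj_on (\<lambda>j. i j mod d) F"
  proof (rule inj_onI)
    fix x y assume x: "x \<in> F" and y: "y \<in> F" and eq: "i x mod d = i y mod d"
    show "x = y"
    proof (rule ccontr)
      assume "x \<noteq> y"
      then consider "x < y" | "y < x" by linarith
      then show False
      proof cases
        case 1 then show False using x y eq unfolding F_def by auto
      next
        case 2 then show False using x y eq unfolding F_def by auto
      qed
    qed
  qed
  have imgF: "(\<lambda>j. i j mod d) ` F \<subseteq> {..<d}" using d1 by auto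
  have finF: "finite F"
    using finite_imageD[OF finite_subset[OF imgF] injF] by simp
  have cardF: "card F \<le> d" using card_inj_on_le[OF injF imgF] by simp
  have finJ: "finite J" unfolding J_def using finF by simp
  have cardJ: "card J \<le> i 2 - i 1 + 1"
  proof -
    have "card J \<le> Suc (card F)" unfolding J_def using finF by (simp add: card_insert_if)
    then show ?thesis using cardF d_def by simp
  qed
  have oneF: "1 \<in> F" unfolding F_def by simp
  have 1: "1 \<in> J" and 2: "2 \<in> J" unfolding J_def using oneF by auto
  define W where "W = ssum J (\<lambda>j. V (i j))"
  have VFA: "\<And>j. j \<ge> 1 \<Longrightarrow> V (i j) \<subseteq> FA"
    using assms(3) ipos unfolding is_Tspace_def is_subspace_def by blast
  have Wsub: "is_subspace W" unfolding W_def
    by (rule ssum_subspace) (use VFA JF in auto)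
  define P where "P n \<longleftrightarrow> n \<ge> 1 \<and> V n \<subseteq> W" for n
  have cl: "\<And>u v. P u \<Longrightarrow> P v \<Longrightarrow> u < v \<Longrightarrow> P (2*v - u)"
  proof -
    fix u v assume Pu: "P u" and Pv: "P v" and uv: "u < v"
    have u1: "u \<ge> 1" using Pu P_def by simp
    have m1: "v - u \<ge> 1" using uv by simp
    have sh: "V (2*(v-u)+1+(u-1)) \<subseteq> ssum2 (V (v-u+1+(u-1))) (V (1+(u-1)))"
      using shiftB[OF assms(3) assms(4) assms(5) m1] by blast
    have e1: "2*(v-u)+1+(u-1) = 2*v - u" and e2: "v-u+1+(u-1) = v" and e3: "1+(u-1) = u"
      using u1 uv by auto
    have sh2: "V (2*v-u) \<subseteq> ssum2 (V v) (V u)" using sh unfolding e1 e2 e3 .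
    have "ssum2 (V v) (V u) \<subseteq> W"
    proof
      fix y assume "y \<in> ssum2 (V v) (V u)"
      then obtain f g where fg: "y = fadd f g" "f \<in> V v" "g \<in> V u" unfolding ssum2_def by blast
      then have "f \<in> W" "g \<in> W" using Pu Pv P_def by auto
      then show "y \<in> W" using fg Wsub unfolding is_subspace_def by blast
    qed
    then show "P (2*v - u)" using sh2 uv P_def by auto
  qed
  have PJ: "\<And>j. j \<in> J \<Longrightarrow> P (i j)"
    unfolding P_def W_def using ssum_upper ipos JF by (metis atLeast_iff subsetD)
  have Pa: "P a" using PJ[OF 1] a_def by simp
  have Pb: "P (a + d)" using PJ[OF 2] b by simp
  have Pprog: "\<And>k. P (a + k*d)" using prog[where P=P, OF cl Pa Pb d1] by blast
  have main: "\<And>j. j \<ge> 1 \<Longrightarrow> V (i j) \<subseteq> W"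
  proof -
    fix j :: nat assume j1: "j \<ge> 1"
    define n where "n = i j"
    define j0 where "j0 = (LEAST j'. j' \<ge> 1 \<and> i j' mod d = i j mod d)"
    have j0p: "j0 \<ge> 1 \<and> i j0 mod d = i j mod d"
      unfolding j0_def by (rule LeastI[of _ j]) (use j1 in simp)
    have j0le: "j0 \<le> j" unfolding j0_def by (rule Least_le) (use j1 in simp)
    have "j0 \<in> F" unfolding F_def
    proof (intro CollectI conjI allI impI)
      show "1 \<le> j0" using j0p by simp
      fix j' assume "1 \<le> j' \<and> j' < j0"
      then have "\<not> (j' \<ge> 1 \<and> i j' mod d = i j mod d)"
        unfolding j0_def using not_less_Least by blast
      then show "i j' mod d \<noteq> i j0 mod d" using j0p \<open>1 \<le> j' \<and> j' < j0\<close> by simp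
    qed
    then have "j0 \<in> J" unfolding J_def by simp
    define r where "r = i j0"
    have Pr: "P r" using PJ \<open>j0 \<in> J\<close> r_def by simp
    have rn: "r \<le> n" unfolding r_def n_def using imono j0p j0le by simp
    have ar: "a \<le> r" unfolding r_def a_def using imono j0p by simp
    have modeq: "n mod d = r mod d" using j0p r_def n_def by simp
    define q where "q = (r - a) div d"
    define g where "g = (r - a) mod d"
    define x where "x = a + q*d"
    have rx: "r = x + g" unfolding x_def q_def g_def using ar
      by (metis add.assoc le_add_diff_inverse mult.commute div_mult_mod_eq)
    have "d dvd n - r" using mod_eq_dvd_iff_nat[OF rn] modeq by simp
    then obtain k where k: "n - r = k * d" by (metis dvd_def mult.commute)
    have nk: "n = r + k*d" using k rn by simp
    have "P n"
    proof (cases "g = 0")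
      case True
      then have "n = a + (q + k)*d" using nk rx x_def by (simp add: algebra_simps)
      then show ?thesis using Pprog by simp
    next
      case False
      have Px: "P x" using Pprog x_def by simp
      have Pxg: "P (x + g)" using Pr rx by simp
      have "P (a + (q+1)*d)" using Pprog by blast
      then have Pxd: "P (x + d)" unfolding x_def by (simp add: algebra_simps)
      have "P (x + 1*g + k*d)"
        using two[where P=P, OF cl Px Pxg Pxd _ d1, of 1 k] False by simp
      then show ?thesis using nk rx by (simp add: algebra_simps)
    qed
    then show "V (i j) \<subseteq> W" using P_def n_def by simp
  qed
  have "ssum {j. j \<ge> 1} (\<lambda>j. V (i j)) \<subseteq> W"
    by (rule ssum_least[OF Wsub]) (use main in auto)
  moreover have "W \<subseteq> ssum {j. j \<ge> 1} (\<lambda>j. V (i j))"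
    unfolding W_def by (rule ssum_mono) (use JF in auto)
  ultimately show ?thesis using JF finJ cardJ 1 2 W_def by blast
qed

end
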